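(* Let $C\subseteq[n]$ (viewed as a single column of boxes, one box in row $i$ for each $i\in C$) and let $r_C$ be the rank function of the Schubert matroid $SM_n(C)$. Then for every subset $S\subseteq[n]$, \[r_C(S)=\max\{|\mathcal{F}|\colon \mathcal{F}\in\mathcal{F}(C,S)\}.\]
   Context: For $T=\{a_1<\cdots<a_k\}$ and $S=\{b_1<\cdots<b_k\}$ subsets of $[n]$, $T\le S$ means $\#T=\#S$ and $a_i\le b_i$ for all $i$. $SM_n(C)$ is the matroid on $[n]$ with bases $\{T\subseteq[n]\colon T\le C\}$, and $r_C(A)=\max\{\#(A\cap B)\colon B\text{ a basis}\}$. A filling of $C$ is an assignment of positive integers to some (possibly none) of the boxes of $C$; unassigned boxes are empty, and $|\mathcal{F}|$ is the number of nonempty boxes. A filling is column-strict if the integers appearing are distinct, and flagged if each integer placed in the box of row $i$ is at most $i$. $\mathcal{F}(C,S)$ is the set of column-strict flagged fillings of $C$ all of whose entries lie in $S$. *)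

theory Defs
  imports Main
begin

definition gale_le :: "nat set \<Rightarrow> nat set \<Rightarrow> bool" where
  "gale_le T S \<longleftrightarrow> card T = card S \<and>
     (\<forall>i < card T. sorted_list_of_set T ! i \<le> sorted_list_of_set S ! i)"

definition schubert_bases :: "nat \<Rightarrow> nat set \<Rightarrow> nat set set" where
  "schubert_bases n C = {T. T \<subseteq> {1..n} \<and> gale_le T C}"

definition schubert_rank :: "nat \<Rightarrow> nat set \<Rightarrow> nat set \<Rightarrow> nat" where
  "schubert_rank n C A = Max ((\<lambda>B. card (A \<inter> B)) ` schubert_bases n C)"

text \<open>A filling of the single column C: a partial map from boxes (rows i \<in> C) to
positive integers; None = empty box. Column-strict flagged fillings with entries in S.\<close>
definition col_fillings :: "nat set \<Rightarrow> nat set \<Rightarrow> (nat \<Rightarrow> nat option) set" where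
  "col_fillings C S = {F. dom F \<subseteq> C
      \<and> (\<forall>i x. F i = Some x \<longrightarrow> 0 < x \<and> x \<le> i \<and> x \<in> S)
      \<and> inj_on F (dom F)}"

definition filling_size :: "(nat \<Rightarrow> nat option) \<Rightarrow> nat" where
  "filling_size F = card (dom F)"

end

theory Submission
  imports Defs
begin

lemma bij_upd:
  assumes "bij_betw f A B" "x \<notin> A" "y \<notin> B"
  shows "bij_betw (f(x:=y)) (insert x A) (insert y B)"
proof -
  have "bij_betw (f(x:=y)) A B = bij_betw f A B" by (rule bij_betw_cong) (use assms in auto)
  hence "bij_betw (f(x:=y)) A B" using assms(1) by simp
  from notIn_Un_bij_betw[OF assms(2) _ this] assms(3) show ?thesis by simp
qed

lemma extend:
  fixes C :: "nat set" and F :: "nat \<Rightarrow> nat option"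
  assumes "finite C" "0 \<notin> C" "dom F \<subseteq> C" "inj_on F (dom F)"
    "\<forall>i x. F i = Some x \<longrightarrow> 0 < x \<and> x \<le> i"
  shows "\<exists>B \<psi>. bij_betw \<psi> C B \<and> (\<forall>c\<in>C. 0 < \<psi> c \<and> \<psi> c \<le> c) \<and> ran F \<subseteq> B"
  using assms
proof (induction C arbitrary: F rule: finite_linorder_max_induct)
  case empty
  then show ?case by (auto simp: ran_def bij_betw_def)
next
  case (insert m A)
  let ?F = "F |` A"
  have d: "dom ?F \<subseteq> A" by auto
  have i: "inj_on ?F (dom ?F)" using insert.prems(3)
    by (smt (verit, ccfv_SIG) dom_restrict inj_on_def Int_iff restrict_in)
  have p: "\<forall>i x. ?F i = Some x \<longrightarrow> 0 < x \<and> x \<le> i" using insert.prems(4)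
    by (simp add: restrict_map_def)
  have "\<exists>B \<psi>. bij_betw \<psi> A B \<and> (\<forall>c\<in>A. 0 < \<psi> c \<and> \<psi> c \<le> c) \<and> ran ?F \<subseteq> B"
    using insert.prems(1) by (intro insert.IH[OF _ d i p]) auto
  then obtain B \<psi> where B: "bij_betw \<psi> A B" "\<forall>c\<in>A. 0 < \<psi> c \<and> \<psi> c \<le> c" "ran ?F \<subseteq> B"
    by auto
  have mA: "m \<notin> A" using insert(2) by auto
  have Bm: "\<forall>b\<in>B. b < m" using B(1,2) insert(2) by (fastforce simp: bij_betw_def)
  have m0: "0 < m" using insert.prems(1) by auto
  have ranF: "ran F \<subseteq> ran ?F \<union> {x. F m = Some x}"
    using insert.prems(2) by (auto simp: ran_def restrict_map_def)
  show ?case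
  proof (cases "\<exists>x. F m = Some x \<and> x \<notin> B")
    case True
    then obtain x where x: "F m = Some x" "x \<notin> B" by auto
    have "bij_betw (\<psi>(m:=x)) (insert m A) (insert x B)" by (rule bij_upd[OF B(1) mA x(2)])
    moreover have "\<forall>c\<in>insert m A. 0 < (\<psi>(m:=x)) c \<and> (\<psi>(m:=x)) c \<le> c"
      using B(2) insert.prems(4) x(1) mA by auto
    moreover have "ran F \<subseteq> insert x B" using ranF B(3) x(1) by auto
    ultimately show ?thesis by blast
  next
    case False
    have "bij_betw (\<psi>(m:=m)) (insert m A) (insert m B)" using Bm by (intro bij_upd[OF B(1) mA]) auto
    moreover have "\<forall>c\<in>insert m A. 0 < (\<psi>(m:=m)) c \<and> (\<psi>(m:=m)) c \<le> c"
      using B(2) m0 mA by auto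
    moreover have "ran F \<subseteq> insert m B" using ranF B(3) False by auto
    ultimately show ?thesis by blast
  qed
qed

lemma bij_gale:
  assumes "finite C" "bij_betw \<psi> C B" "\<forall>c\<in>C. \<psi> c \<le> c"
  shows "gale_le B C"
proof -
  have fB: "finite B" using assms bij_betw_finite by blast
  have cc: "card B = card C" using assms(2) bij_betw_same_card by metis
  define sB where "sB = sorted_list_of_set B"
  define sC where "sC = sorted_list_of_set C"
  have lB: "length sB = card C" using cc by (simp add: sB_def)
  have lC: "length sC = card C" by (simp add: sC_def)
  have stB: "sorted_wrt (<) sB" "set sB = B" using fB by (simp_all add: sB_def)
  have stC: "sorted_wrt (<) sC" "set sC = C" using assms(1) by (simp_all add: sC_def)
  have "sB ! i \<le> sC ! i" if i: "i < card C" for i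
  proof (rule ccontr)
    assume "\<not> sB ! i \<le> sC ! i"
    hence lt: "sC ! i < sB ! i" by simp
    let ?P = "{c\<in>C. c \<le> sC ! i}"
    have "(!) sC ` {..i} \<subseteq> ?P"
    proof
      fix c assume "c \<in> (!) sC ` {..i}"
      then obtain j where j: "j \<le> i" "c = sC ! j" by auto
      then show "c \<in> ?P" using stC i lC
        by (auto simp: sorted_wrt_iff_nth_less le_less)
    qed
    moreover have "card ((!) sC ` {..i}) = Suc i"
      using stC i lC by (subst card_image) (auto intro!: inj_on_nth simp: strict_sorted_iff)
    ultimately have c1: "Suc i \<le> card ?P" using assms(1)
      by (metis (no_types, lifting) card_mono finite_subset mem_Collect_eq subsetI)
    have "\<psi> ` ?P \<subseteq> (!) sB ` {..<i}"
    proof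
      fix b assume "b \<in> \<psi> ` ?P"
      then obtain c where c: "c \<in> C" "c \<le> sC ! i" "b = \<psi> c" by auto
      hence bB: "b \<in> B" "b \<le> sC ! i" using assms(2,3) by (auto simp: bij_betw_def)
      then obtain j where j: "j < card C" "b = sB ! j" using stB lB by (metis in_set_conv_nth)
      have "j < i"
      proof (rule ccontr)
        assume "\<not> j < i"
        hence "i = j \<or> i < j" by auto
        hence "sB ! i \<le> sB ! j" using stB j lB i by (auto simp: sorted_wrt_iff_nth_less le_less)
        thus False using lt bB j by simp
      qed
      thus "b \<in> (!) sB ` {..<i}" using j by auto
    qed
    hence "card (\<psi> ` ?P) \<le> i"
      by (metis card_image_le card_lessThan finite_lessThan order_trans card_mono finite_imageI)
    moreover have "card (\<psi> ` ?P) = card ?P"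
      using assms(2) by (intro card_image) (auto simp: bij_betw_def intro: inj_on_subset)
    ultimately show False using c1 by simp
  qed
  thus ?thesis unfolding gale_le_def using cc by (simp add: sB_def sC_def)
qed

lemma gale_bij:
  assumes "finite C" "finite B" "gale_le B C"
  shows "\<exists>\<psi>. bij_betw \<psi> C B \<and> (\<forall>c\<in>C. \<psi> c \<le> c)"
proof -
  define sB where "sB = sorted_list_of_set B"
  define sC where "sC = sorted_list_of_set C"
  have cc: "card B = card C" using assms(3) by (simp add: gale_le_def)
  have le: "\<forall>i<card C. sB ! i \<le> sC ! i" using assms(3) cc by (simp add: gale_le_def sB_def sC_def)
  have bC: "bij_betw ((!) sC) {..<card C} C"
    by (rule bij_betw_nth) (use assms(1) in \<open>simp_all add: sC_def\<close>)
  have bB: "bij_betw ((!) sB) {..<card C} B"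
    by (rule bij_betw_nth) (use assms(2) cc in \<open>simp_all add: sB_def\<close>)
  define \<psi> where "\<psi> = (\<lambda>c. sB ! (inv_into {..<card C} ((!) sC) c))"
  have "bij_betw \<psi> C B" unfolding \<psi>_def
    using bij_betw_trans[OF bij_betw_inv_into[OF bC] bB] by (simp add: comp_def)
  moreover have "\<forall>c\<in>C. \<psi> c \<le> c"
  proof
    fix c assume c: "c \<in> C"
    let ?i = "inv_into {..<card C} ((!) sC) c"
    have "?i < card C" using bij_betw_inv_into[OF bC] c by (auto simp: bij_betw_def)
    moreover have "sC ! ?i = c" using bC c by (simp add: bij_betw_inv_into_right)
    ultimately show "\<psi> c \<le> c" using le by (metis \<psi>_def)
  qed
  ultimately show ?thesis by blast
qed

lemma bij_filling:
  assumes "bij_betw \<psi> C B" "\<forall>c\<in>C. \<psi> c \<le> c" "B \<subseteq> {1..n}" "finite C"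
  shows "\<exists>F\<in>col_fillings C S. filling_size F = card (S \<inter> B)"
proof -
  define F where "F = (\<lambda>c. if c \<in> C \<and> \<psi> c \<in> S then Some (\<psi> c) else None)"
  have dom: "dom F = {c\<in>C. \<psi> c \<in> S}" by (auto simp: F_def dom_def)
  have inj: "inj_on \<psi> C" using assms(1) by (simp add: bij_betw_def)
  have "F \<in> col_fillings C S"
    unfolding col_fillings_def
  proof (intro CollectI conjI allI impI)
    show "dom F \<subseteq> C" using dom by auto
    fix i x assume "F i = Some x"
    hence "i \<in> C" "\<psi> i \<in> S" "x = \<psi> i" by (auto simp: F_def split: if_splits)
    moreover have "\<psi> i \<in> B" using assms(1) \<open>i \<in> C\<close> by (auto simp: bij_betw_def)
    ultimately show "0 < x" "x \<le> i" "x \<in> S" using assms(2,3) by auto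
  next
    show "inj_on F (dom F)" using inj unfolding dom inj_on_def F_def by auto
  qed
  moreover have "filling_size F = card (S \<inter> B)"
  proof -
    have "\<psi> ` {c\<in>C. \<psi> c \<in> S} = S \<inter> B" using assms(1) by (auto simp: bij_betw_def)
    moreover have "card (\<psi> ` {c\<in>C. \<psi> c \<in> S}) = card {c\<in>C. \<psi> c \<in> S}"
      by (rule card_image) (use inj in \<open>auto intro: inj_on_subset\<close>)
    ultimately show ?thesis by (simp add: filling_size_def dom)
  qed
  ultimately show ?thesis by blast
qed

lemma card_ran:
  assumes "inj_on F (dom F)"
  shows "card (ran F) = card (dom F)"
proof -
  have "ran F = (the \<circ> F) ` dom F" by (force simp: ran_def dom_def)
  moreover have "inj_on (the \<circ> F) (dom F)" using assms
    by (auto simp: inj_on_def dom_def)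
  ultimately show ?thesis by (metis card_image)
qed

theorem theorem3p4:
  fixes n :: nat and C S :: "nat set"
  assumes "C \<subseteq> {1..n}" and "S \<subseteq> {1..n}"
  shows "schubert_rank n C S = Max (filling_size ` col_fillings C S)"
proof -
  have fC: "finite C" using assms(1) finite_subset by blast
  have fbases: "finite (schubert_bases n C)" unfolding schubert_bases_def
    by (rule finite_subset[of _ "Pow {1..n}"]) auto
  have Cb: "C \<in> schubert_bases n C" using assms(1) by (simp add: schubert_bases_def gale_le_def)
  have fsz: "filling_size F \<le> card C" if "F \<in> col_fillings C S" for F
    using that fC by (auto simp: col_fillings_def filling_size_def intro: card_mono)
  have ffill: "finite (filling_size ` col_fillings C S)"
    by (rule finite_subset[of _ "{..card C}"]) (use fsz in auto)
  have emp: "Map.empty \<in> col_fillings C S" by (simp add: col_fillings_def)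
  show ?thesis unfolding schubert_rank_def
  proof (rule antisym)
    show "Max ((\<lambda>B. card (S \<inter> B)) ` schubert_bases n C) \<le> Max (filling_size ` col_fillings C S)"
    proof (subst Max_le_iff)
      show "\<forall>a\<in>(\<lambda>B. card (S \<inter> B)) ` schubert_bases n C. a \<le> Max (filling_size ` col_fillings C S)"
      proof
        fix a assume "a \<in> (\<lambda>B. card (S \<inter> B)) ` schubert_bases n C"
        then obtain B where B: "B \<subseteq> {1..n}" "gale_le B C" "a = card (S \<inter> B)"
          by (auto simp: schubert_bases_def)
        have "finite B" using B(1) finite_subset by blast
        then obtain \<psi> where "bij_betw \<psi> C B" "\<forall>c\<in>C. \<psi> c \<le> c" using gale_bij fC B(2) by blast
        then obtain F where "F \<in> col_fillings C S" "filling_size F = a"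
          using bij_filling[OF _ _ B(1) fC] B(3) by metis
        thus "a \<le> Max (filling_size ` col_fillings C S)" using ffill by (metis Max_ge imageI)
      qed
    qed (use fbases Cb in auto)
  next
    show "Max (filling_size ` col_fillings C S) \<le> Max ((\<lambda>B. card (S \<inter> B)) ` schubert_bases n C)"
    proof (subst Max_le_iff)
      show "\<forall>a\<in>filling_size ` col_fillings C S. a \<le> Max ((\<lambda>B. card (S \<inter> B)) ` schubert_bases n C)"
      proof
        fix a assume "a \<in> filling_size ` col_fillings C S"
        then obtain F where F: "F \<in> col_fillings C S" "a = filling_size F" by auto
        have Fp: "dom F \<subseteq> C" "inj_on F (dom F)" "\<forall>i x. F i = Some x \<longrightarrow> 0 < x \<and> x \<le> i"
          "\<forall>i x. F i = Some x \<longrightarrow> x \<in> S"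
          using F(1) by (auto simp: col_fillings_def)
        have "0 \<notin> C" using assms(1) by auto
        then obtain B \<psi> where B: "bij_betw \<psi> C B" "\<forall>c\<in>C. 0 < \<psi> c \<and> \<psi> c \<le> c" "ran F \<subseteq> B"
          using extend[OF fC _ Fp(1-3)] by blast
        have Bn: "B \<subseteq> {1..n}"
        proof
          fix b assume "b \<in> B"
          then obtain c where "c \<in> C" "b = \<psi> c" using B(1) by (auto simp: bij_betw_def)
          thus "b \<in> {1..n}" using B(2) assms(1) by fastforce
        qed
        have "gale_le B C" using bij_gale[OF fC B(1)] B(2) by auto
        hence Bb: "B \<in> schubert_bases n C" using Bn by (simp add: schubert_bases_def)
        have "ran F \<subseteq> S \<inter> B" using B(3) Fp(4) by (auto simp: ran_def)
        moreover have "finite B" using Bn finite_subset by blast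
        ultimately have "card (ran F) \<le> card (S \<inter> B)" by (simp add: card_mono)
        hence "a \<le> card (S \<inter> B)" using F(2) card_ran[OF Fp(2)] by (simp add: filling_size_def)
        also have "\<dots> \<le> Max ((\<lambda>B. card (S \<inter> B)) ` schubert_bases n C)"
          using fbases Bb by (intro Max_ge) auto
        finally show "a \<le> Max ((\<lambda>B. card (S \<inter> B)) ` schubert_bases n C)" .
      qed
    qed (use ffill emp in auto)
  qed
qed

end
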